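(* Let $(X,\sigma_X,P)$ be a probability space, $(Y,\cdot)$ a set with a function $\sigma\colon Y\times Y\to\mathbb R$, $\mathcal F$ a set of functions $X\to Y$ and $Q$ a probability measure on $\mathcal F$ (all functions involved assumed measurable as needed). Let $k\ge1$. Suppose $\vec x^*=\{x^*_1,\dots,x^*_k\}\subseteq X$ is a quantization minimizing the reconstruction error $E_\rho$ over all $k$-point quantizations of $X$, and let $\vec X^{\rho}$ be the partition of $X$ induced by $\rho$ and $\vec x^*$. Then for every $k$-point quantization $\vec x$ of $X$ and every partition $\vec X$ of $X$ faithful to $\vec x$, $$E_{\mathcal F}(\vec x^*,\vec X^{\rho})\le E_{\mathcal F}(\vec x,\vec X),$$ i.e. the reconstruction error $E_{\mathcal F}$ of $\mathcal F$ is minimal at the pair $(\vec x^*,\vec X^\rho)$.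
   Context: The canonical distortion measure is $\rho(x,y)=\int_{\mathcal F}\sigma(f(x),f(y))\,dQ(f)$. A quantization is a set $\vec x=\{x_1,\dots,x_k\}\subseteq X$; $q_\rho(x)$ is a point $x_i$ of $\vec x$ minimizing $\rho(x,x_i)$; $E_\rho(\vec x)=\int_X\rho(x,q_\rho(x))\,dP(x)$. A partition $\vec X=\{X_1,\dots,X_k\}$ of $X$ is faithful to $\vec x$ if $x_i\in X_i$ for each $i$. Given $(\vec x,\vec X)$, for $f\in\mathcal F$ the approximation $\hat f$ is $\hat f(x)=f(x_i)$ for $x\in X_i$; $d_P(f,\hat f)=\int_X\sigma(f(x),\hat f(x))\,dP(x)$ and $E_{\mathcal F}(\vec x,\vec X)=\int_{\mathcal F}d_P(f,\hat f)\,dQ(f)$. The partition induced by $\rho$ and $\vec x$ is $\vec X^\rho=\{X^\rho_1,\dots,X^\rho_k\}$ with $X^\rho_i=\{x:\rho(x,x_i)\le\rho(x,x_j)\ \forall j\ne i\}$, ties broken arbitrarily so as to obtain a partition. *)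

theory Defs
  imports "HOL-Probability.Probability"
begin

text \<open>Canonical distortion measure rho(x,y) = integral over F of sigma(f x, f y) dQ(f).
  The function class F is the space of the measure Q.\<close>
definition rho :: "('x \<Rightarrow> 'y) measure \<Rightarrow> ('y \<Rightarrow> 'y \<Rightarrow> real) \<Rightarrow> 'x \<Rightarrow> 'x \<Rightarrow> real" where
  "rho Q \<sigma> x y = (\<integral>f. \<sigma> (f x) (f y) \<partial>Q)"

definition quantization :: "'x measure \<Rightarrow> nat \<Rightarrow> (nat \<Rightarrow> 'x) \<Rightarrow> bool" where
  "quantization P k xs \<longleftrightarrow> xs ` {..<k} \<subseteq> space P \<and> inj_on xs {..<k}"

definition q_rho :: "('x \<Rightarrow> 'y) measure \<Rightarrow> ('y \<Rightarrow> 'y \<Rightarrow> real) \<Rightarrow> nat \<Rightarrow> (nat \<Rightarrow> 'x) \<Rightarrow> 'x \<Rightarrow> 'x" where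
  "q_rho Q \<sigma> k xs x = xs (ARG_MIN (\<lambda>i. rho Q \<sigma> x (xs i)) i. i < k)"

definition E_rho :: "'x measure \<Rightarrow> ('x \<Rightarrow> 'y) measure \<Rightarrow> ('y \<Rightarrow> 'y \<Rightarrow> real) \<Rightarrow> nat \<Rightarrow> (nat \<Rightarrow> 'x) \<Rightarrow> real" where
  "E_rho P Q \<sigma> k xs = (\<integral>x. rho Q \<sigma> x (q_rho Q \<sigma> k xs x) \<partial>P)"

text \<open>A (measurable) partition X_0..X_(k-1) of X, encoded by the index map c:
  X_i = {x \<in> X. c x = i}.\<close>
definition partition_of :: "'x measure \<Rightarrow> nat \<Rightarrow> ('x \<Rightarrow> nat) \<Rightarrow> bool" where
  "partition_of P k c \<longleftrightarrow> c \<in> space P \<rightarrow> {..<k} \<and> (\<forall>i<k. {x \<in> space P. c x = i} \<in> sets P)"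

definition faithful :: "nat \<Rightarrow> (nat \<Rightarrow> 'x) \<Rightarrow> ('x \<Rightarrow> nat) \<Rightarrow> bool" where
  "faithful k xs c \<longleftrightarrow> (\<forall>i<k. c (xs i) = i)"

definition induced_partition :: "'x measure \<Rightarrow> ('x \<Rightarrow> 'y) measure \<Rightarrow> ('y \<Rightarrow> 'y \<Rightarrow> real) \<Rightarrow> nat \<Rightarrow> (nat \<Rightarrow> 'x) \<Rightarrow> ('x \<Rightarrow> nat) \<Rightarrow> bool" where
  "induced_partition P Q \<sigma> k xs c \<longleftrightarrow> partition_of P k c \<and>
     (\<forall>x\<in>space P. \<forall>j<k. rho Q \<sigma> x (xs (c x)) \<le> rho Q \<sigma> x (xs j))"

definition approx :: "('x \<Rightarrow> 'y) \<Rightarrow> (nat \<Rightarrow> 'x) \<Rightarrow> ('x \<Rightarrow> nat) \<Rightarrow> 'x \<Rightarrow> 'y" where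
  "approx f xs c x = f (xs (c x))"

definition d_P :: "'x measure \<Rightarrow> ('y \<Rightarrow> 'y \<Rightarrow> real) \<Rightarrow> ('x \<Rightarrow> 'y) \<Rightarrow> ('x \<Rightarrow> 'y) \<Rightarrow> real" where
  "d_P P \<sigma> f g = (\<integral>x. \<sigma> (f x) (g x) \<partial>P)"

definition E_F :: "'x measure \<Rightarrow> ('x \<Rightarrow> 'y) measure \<Rightarrow> ('y \<Rightarrow> 'y \<Rightarrow> real) \<Rightarrow> (nat \<Rightarrow> 'x) \<Rightarrow> ('x \<Rightarrow> nat) \<Rightarrow> real" where
  "E_F P Q \<sigma> xs c = (\<integral>f. d_P P \<sigma> f (approx f xs c) \<partial>Q)"

end

theory Submission
  imports Defs
begin

lemma argmin_props:
  fixes g :: "nat \<Rightarrow> real"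
  assumes "k \<ge> 1"
  shows "(ARG_MIN g i. i < k) < k \<and> (\<forall>j<k. g (ARG_MIN g i. i < k) \<le> g j)"
proof -
  have fin: "finite {..<k}" "{..<k} \<noteq> {}" using assms by (auto simp: lessThan_empty_iff)
  have eq: "arg_min_on g {..<k} = (ARG_MIN g i. i < k)"
    unfolding arg_min_on_def by simp
  show ?thesis using arg_min_if_finite[OF fin, of g] unfolding eq by (auto simp: not_less)
qed

lemma key_int:
  fixes \<sigma> :: "'y \<Rightarrow> 'y \<Rightarrow> real"
  assumes PQ: "prob_space P" "prob_space Q"
    and int_prod: "\<And>y. y \<in> space P \<Longrightarrow> integrable (Q \<Otimes>\<^sub>M P) (\<lambda>(f, x). \<sigma> (f x) (f y))"
    and q: "quantization P k xs" and c: "partition_of P k c"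
  shows "integrable (Q \<Otimes>\<^sub>M P) (\<lambda>(f, x). \<sigma> (f x) (f (xs (c x))))"
proof -
  let ?g = "\<lambda>z. (\<Sum>i<k. indicator (space Q \<times> {x \<in> space P. c x = i}) z * (case z of (f, x) \<Rightarrow> \<sigma> (f x) (f (xs i))))"
  have I: "integrable (Q \<Otimes>\<^sub>M P) ?g"
  proof (rule Bochner_Integration.integrable_sum)
    fix i assume i: "i \<in> {..<k}"
    have s: "space Q \<times> {x \<in> space P. c x = i} \<in> sets (Q \<Otimes>\<^sub>M P)"
      using c i unfolding partition_of_def by (intro pair_measureI) auto
    have "xs i \<in> space P" using q i unfolding quantization_def by auto
    from integrable_mult_indicator[OF s int_prod[OF this]]
    show "integrable (Q \<Otimes>\<^sub>M P) (\<lambda>z. indicator (space Q \<times> {x \<in> space P. c x = i}) z * (case z of (f, x) \<Rightarrow> \<sigma> (f x) (f (xs i))))"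
      by simp
  qed
  have eqs: "\<And>z. z \<in> space (Q \<Otimes>\<^sub>M P) \<Longrightarrow> ?g z = (\<lambda>(f, x). \<sigma> (f x) (f (xs (c x)))) z"
  proof -
    fix z assume z: "z \<in> space (Q \<Otimes>\<^sub>M P)"
    obtain f x where zf: "z = (f, x)" by fastforce
    have fx: "f \<in> space Q" "x \<in> space P" using z zf by (auto simp: space_pair_measure)
    have ck: "c x < k" using c fx unfolding partition_of_def by auto
    have "?g z = (\<Sum>i<k. if i = c x then \<sigma> (f x) (f (xs i)) else 0)"
      using fx by (intro sum.cong) (auto simp: zf indicator_def)
    also have "\<dots> = \<sigma> (f x) (f (xs (c x)))" using ck by (simp add: sum.delta)
    finally show "?g z = (\<lambda>(f, x). \<sigma> (f x) (f (xs (c x)))) z" by (simp add: zf)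
  qed
  show ?thesis by (rule iffD1[OF Bochner_Integration.integrable_cong[OF refl eqs] I])
qed

lemma EF_eq:
  fixes \<sigma> :: "'y \<Rightarrow> 'y \<Rightarrow> real"
  assumes PQ: "prob_space P" "prob_space Q"
    and int_prod: "\<And>y. y \<in> space P \<Longrightarrow> integrable (Q \<Otimes>\<^sub>M P) (\<lambda>(f, x). \<sigma> (f x) (f y))"
    and q: "quantization P k xs" and c: "partition_of P k c"
  shows "E_F P Q \<sigma> xs c = (\<integral>x. rho Q \<sigma> x (xs (c x)) \<partial>P)"
    and "integrable P (\<lambda>x. rho Q \<sigma> x (xs (c x)))"
proof -
  interpret Q: prob_space Q by fact
  interpret P: prob_space P by fact
  interpret pair_sigma_finite Q P ..
  have I: "integrable (Q \<Otimes>\<^sub>M P) (case_prod (\<lambda>f x. \<sigma> (f x) (f (xs (c x)))))"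
    using key_int[OF PQ int_prod q c] by simp
  show "E_F P Q \<sigma> xs c = (\<integral>x. rho Q \<sigma> x (xs (c x)) \<partial>P)"
    unfolding E_F_def d_P_def approx_def rho_def
    using integral_fst[OF I] integral_snd[OF I] by simp
  show "integrable P (\<lambda>x. rho Q \<sigma> x (xs (c x)))"
    unfolding rho_def using integrable_snd[OF I] by simp
qed

lemma Erho_int:
  fixes \<sigma> :: "'y \<Rightarrow> 'y \<Rightarrow> real"
  assumes PQ: "prob_space P" "prob_space Q" and k: "k \<ge> 1"
    and int_prod: "\<And>y. y \<in> space P \<Longrightarrow> integrable (Q \<Otimes>\<^sub>M P) (\<lambda>(f, x). \<sigma> (f x) (f y))"
    and q: "quantization P k xs"
  shows "integrable P (\<lambda>x. rho Q \<sigma> x (q_rho Q \<sigma> k xs x))"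
proof -
  have ci: "partition_of P k (\<lambda>_. i)" if "i < k" for i
    using that unfolding partition_of_def by auto
  have gi: "integrable P (\<lambda>x. rho Q \<sigma> x (xs i))" if "i < k" for i
    using EF_eq(2)[OF PQ int_prod q ci[OF that]] by simp
  have eq: "rho Q \<sigma> x (q_rho Q \<sigma> k xs x) = Min ((\<lambda>i. rho Q \<sigma> x (xs i)) ` {..<k})" for x
  proof -
    define a where "a = (ARG_MIN (\<lambda>i. rho Q \<sigma> x (xs i)) i. i < k)"
    have a: "a < k" "\<forall>j<k. rho Q \<sigma> x (xs a) \<le> rho Q \<sigma> x (xs j)"
      using argmin_props[OF k, of "\<lambda>i. rho Q \<sigma> x (xs i)"] unfolding a_def by auto
    show ?thesis unfolding q_rho_def a_def[symmetric]
      using a by (intro Min_eqI[symmetric]) auto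
  qed
  have S: "integrable P (\<lambda>x. \<Sum>i<k. \<bar>rho Q \<sigma> x (xs i)\<bar>)"
    by (rule Bochner_Integration.integrable_sum, rule integrable_abs, rule gi) simp
  have "integrable P (\<lambda>x. Min ((\<lambda>i. rho Q \<sigma> x (xs i)) ` {..<k}))"
  proof (rule Bochner_Integration.integrable_bound[OF S])
    show "(\<lambda>x. Min ((\<lambda>i. rho Q \<sigma> x (xs i)) ` {..<k})) \<in> borel_measurable P"
      using gi by (intro borel_measurable_Min) auto
    show "AE x in P. norm (Min ((\<lambda>i. rho Q \<sigma> x (xs i)) ` {..<k})) \<le> norm (\<Sum>i<k. \<bar>rho Q \<sigma> x (xs i)\<bar>)"
    proof (intro AE_I2)
      fix x
      have "Min ((\<lambda>i. rho Q \<sigma> x (xs i)) ` {..<k}) \<in> (\<lambda>i. rho Q \<sigma> x (xs i)) ` {..<k}"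
      proof (rule Min_in)
        show "(\<lambda>i. rho Q \<sigma> x (xs i)) ` {..<k} \<noteq> {}" using k by (metis empty_iff image_eqI lessThan_iff less_le_trans zero_less_one)
      qed simp
      then obtain j where j: "j < k" "Min ((\<lambda>i. rho Q \<sigma> x (xs i)) ` {..<k}) = rho Q \<sigma> x (xs j)" by auto
      have "\<bar>rho Q \<sigma> x (xs j)\<bar> \<le> (\<Sum>i<k. \<bar>rho Q \<sigma> x (xs i)\<bar>)"
        using j(1) by (intro member_le_sum) auto
      then show "norm (Min ((\<lambda>i. rho Q \<sigma> x (xs i)) ` {..<k})) \<le> norm (\<Sum>i<k. \<bar>rho Q \<sigma> x (xs i)\<bar>)"
        using j by simp
    qed
  qed
  then show ?thesis unfolding eq .
qed

theorem theorem5p3: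
  fixes P :: "'x measure" and Q :: "('x \<Rightarrow> 'y) measure" and \<sigma> :: "'y \<Rightarrow> 'y \<Rightarrow> real"
    and k :: nat and xstar :: "nat \<Rightarrow> 'x" and cstar :: "'x \<Rightarrow> nat"
  assumes "prob_space P" and "prob_space Q" and "k \<ge> 1"
    and int_prod: "\<And>y. y \<in> space P \<Longrightarrow> integrable (Q \<Otimes>\<^sub>M P) (\<lambda>(f, x). \<sigma> (f x) (f y))"
    and int_Q: "\<And>x y. x \<in> space P \<Longrightarrow> y \<in> space P \<Longrightarrow> integrable Q (\<lambda>f. \<sigma> (f x) (f y))"
    and "quantization P k xstar"
    and opt: "\<And>xs. quantization P k xs \<Longrightarrow> E_rho P Q \<sigma> k xstar \<le> E_rho P Q \<sigma> k xs"
    and "induced_partition P Q \<sigma> k xstar cstar"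
  shows "\<forall>xs c. quantization P k xs \<and> partition_of P k c \<and> faithful k xs c
           \<longrightarrow> E_F P Q \<sigma> xstar cstar \<le> E_F P Q \<sigma> xs c"
proof (intro allI impI, elim conjE)
  fix xs c assume q: "quantization P k xs" and c: "partition_of P k c"
  have cs: "partition_of P k cstar" and csmin: "\<forall>x\<in>space P. \<forall>j<k. rho Q \<sigma> x (xstar (cstar x)) \<le> rho Q \<sigma> x (xstar j)"
    using assms(8) unfolding induced_partition_def by auto
  have qmin: "rho Q \<sigma> x (q_rho Q \<sigma> k ys x) \<le> rho Q \<sigma> x (ys j)" and qin: "\<exists>i<k. q_rho Q \<sigma> k ys x = ys i"
    if "j < k" for x ys j
    using argmin_props[OF assms(3), of "\<lambda>i. rho Q \<sigma> x (ys i)"] that unfolding q_rho_def by auto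
  have "E_F P Q \<sigma> xstar cstar = (\<integral>x. rho Q \<sigma> x (xstar (cstar x)) \<partial>P)"
    by (rule EF_eq(1)[OF assms(1,2) int_prod assms(6) cs])
  also have "\<dots> = E_rho P Q \<sigma> k xstar"
    unfolding E_rho_def
  proof (rule Bochner_Integration.integral_cong[OF refl])
    fix x assume x: "x \<in> space P"
    have ck: "cstar x < k" using cs x unfolding partition_of_def by auto
    obtain i where i: "i < k" "q_rho Q \<sigma> k xstar x = xstar i" using qin[OF ck] by blast
    show "rho Q \<sigma> x (xstar (cstar x)) = rho Q \<sigma> x (q_rho Q \<sigma> k xstar x)"
      using qmin[OF ck, of x xstar] csmin x i by force
  qed
  also have "\<dots> \<le> E_rho P Q \<sigma> k xs" by (rule opt[OF q])
  also have "\<dots> \<le> (\<integral>x. rho Q \<sigma> x (xs (c x)) \<partial>P)"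
    unfolding E_rho_def
  proof (rule integral_mono)
    show "integrable P (\<lambda>x. rho Q \<sigma> x (q_rho Q \<sigma> k xs x))"
      by (rule Erho_int[OF assms(1,2,3) int_prod q])
    show "integrable P (\<lambda>x. rho Q \<sigma> x (xs (c x)))"
      by (rule EF_eq(2)[OF assms(1,2) int_prod q c])
    fix x assume x: "x \<in> space P"
    have ck: "c x < k" using c x unfolding partition_of_def by auto
    show "rho Q \<sigma> x (q_rho Q \<sigma> k xs x) \<le> rho Q \<sigma> x (xs (c x))" by (rule qmin[OF ck])
  qed
  also have "\<dots> = E_F P Q \<sigma> xs c"
    by (rule EF_eq(1)[OF assms(1,2) int_prod q c, symmetric])
  finally show "E_F P Q \<sigma> xstar cstar \<le> E_F P Q \<sigma> xs c" .
qed

end
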